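(* Let $m$ be a positive integer, $n=2m$, let $s$ be an integer with $\gcd(s,3^m+1)=1$, and let $a\in\mathbb{F}_{3^n}^*$. Define $f:\mathbb{F}_{3^n}\to\mathbb{F}_3$ by $f(0)=0$ and $$f(x)=\sum_{i=1}^{\frac{3^m+1}{2}-1}{\rm Tr}_1^n\big(ax^{(2i+s)(3^m-1)}\big).$$ Then $f$ is regular bent if and only if $K_m(a^{3^m+1})=0$.
   Context: $\omega=e^{2\pi\sqrt{-1}/3}$. ${\rm Tr}_k^t$ is the trace map from $\mathbb{F}_{3^t}$ to $\mathbb{F}_{3^k}$. $K_m(\beta)=\sum_{x\in\mathbb{F}_{3^m}}\omega^{{\rm Tr}_1^m(\beta x+x^{3^m-2})}$. For $f:\mathbb{F}_{3^n}\to\mathbb{F}_3$, $W_f(\lambda)=\sum_{x}\omega^{f(x)-{\rm Tr}_1^n(\lambda x)}$; $f$ is regular bent if for every $\lambda$, $W_f(\lambda)=3^{n/2}\omega^{f^*(\lambda)}$ for some function $f^*:\mathbb{F}_{3^n}\to\mathbb{F}_3$. *)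

theory Defs
  imports Complex_Main
begin

text \<open>The ambient finite field F_{3^n} is modelled by a finite field type 'a with
  CARD('a) = 3^n. Its prime field F_3 is {0,1,2} (images of naturals), and the
  subfield F_{3^k} is {x. x^(3^k) = x}.\<close>

definition omega :: complex where
  "omega = cis (2 * pi / 3)"

definition prime_field :: "'a::field set" where
  "prime_field = {of_nat k | k. k < 3}"

definition subfield_pow :: "nat \<Rightarrow> 'a::field set" where
  "subfield_pow k = {x. x ^ (3 ^ k) = x}"

text \<open>omega raised to an element of F_3 (identified with 0,1,2).\<close>
definition chi :: "'a::field \<Rightarrow> complex" where
  "chi t = (\<Sum>k<3::nat. if of_nat k = t then omega ^ k else 0)"

definition tr :: "nat \<Rightarrow> 'a::field \<Rightarrow> 'a" where
  "tr k y = (\<Sum>j<k. y ^ (3 ^ j))"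

definition kloosterman :: "nat \<Rightarrow> 'a::field \<Rightarrow> complex" where
  "kloosterman m \<beta> = (\<Sum>x\<in>subfield_pow m. chi (tr m (\<beta> * x + x ^ (3 ^ m - 2))))"

definition walsh :: "nat \<Rightarrow> ('a::{field,finite} \<Rightarrow> 'a) \<Rightarrow> 'a \<Rightarrow> complex" where
  "walsh n f l = (\<Sum>x\<in>UNIV. chi (f x - tr n (l * x)))"

definition regular_bent :: "nat \<Rightarrow> ('a::{field,finite} \<Rightarrow> 'a) \<Rightarrow> bool" where
  "regular_bent n f \<longleftrightarrow>
     (\<exists>fs :: 'a \<Rightarrow> 'a. (\<forall>l. fs l \<in> prime_field) \<and>
        (\<forall>l. walsh n f l = complex_of_real (sqrt (3 ^ n)) * chi (fs l)))"

end

theory Submission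
  imports Defs "HOL-Number_Theory.Residues" "HOL-Computational_Algebra.Polynomial"
    "HOL-Computational_Algebra.Primes"
begin


lemma sum_lessThan_add_split:
  "(\<Sum>j<a+b. h j) = (\<Sum>j<a. h j) + (\<Sum>j<b. h (a+j)) "
  for h :: "nat \<Rightarrow> 'b::comm_monoid_add"
  by (induction b) (auto simp: add_ac)

lemma omega_explicit: "omega = Complex (-1/2) (sqrt 3 / 2)"
  unfolding omega_def by (simp add: cis.ctr cos_120 sin_120)

lemma omega2: "omega ^ 2 = Complex (-1/2) (- sqrt 3 / 2)"
  unfolding omega_explicit by (simp add: power2_eq_square complex_eq_iff)

lemma omega3: "omega ^ 3 = 1"
  unfolding omega_def DeMoivre by simp

lemma omega_pow_mod: "omega ^ k = omega ^ (k mod 3)"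
proof -
  have "omega ^ k = omega ^ (3 * (k div 3) + k mod 3)" by simp
  also have "\<dots> = (omega^3)^(k div 3) * omega ^ (k mod 3)" by (simp only: power_add power_mult)
  finally show ?thesis by (simp add: omega3)
qed

lemma omega_ne1: "omega \<noteq> 1" "omega^2 \<noteq> 1" "omega \<noteq> omega^2"
  unfolding omega2 by (auto simp: omega_explicit complex_eq_iff)

locale FF =
  fixes m :: nat and ty :: "'a::{field,finite} itself"
  assumes mpos: "m > 0" and cardF: "card (UNIV::'a set) = 3^(2*m)"
begin

lemma CHAR3: "CHAR('a) = 3"
proof -
  have pos: "CHAR('a) > 0" by (rule finite_imp_CHAR_pos) simp
  have pr: "prime CHAR('a)" using prime_CHAR_semidom[OF pos] .
  have "CHAR('a) dvd 3^(2*m)" using CHAR_dvd_CARD[where 'a='a] cardF by simp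
  hence "CHAR('a) dvd 3" using pr prime_dvd_power by blast
  thus ?thesis using pr primes_dvd_imp_eq[of "CHAR('a)" 3] by simp
qed

lemma three0: "(3::'a) = 0"
  using of_nat_CHAR[where 'a='a] CHAR3 by simp

lemma ofnat_eq: "(of_nat i = (of_nat j::'a)) \<longleftrightarrow> i mod 3 = j mod 3"
  using of_nat_eq_iff_cong_CHAR[where 'a='a] CHAR3 by (simp add: cong_def)

lemma ofnat_mod: "(of_nat i :: 'a) = of_nat (i mod 3)"
  using ofnat_eq by simp

lemma frob: "(x + y::'a)^(3^k) = x^(3^k) + y^(3^k)"
  by (rule freshmans_dream') (auto simp: CHAR3)

lemma frob_sum: "(sum f A :: 'a)^(3^k) = sum (\<lambda>i. f i ^ (3^k)) A"
  by (rule freshmans_dream_sum') (auto simp: CHAR3)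

lemma frob_neg: "(- x::'a)^(3^k) = - (x^(3^k))"
  by simp

lemma frob_diff: "(x - y::'a)^(3^k) = x^(3^k) - y^(3^k)"
  using frob[of x "-y" k] by simp

lemma q2: "(3::nat)^(2*m) = 3^m * 3^m"
  by (simp add: mult_2 power_add)

lemma qge3: "(3::nat)^m \<ge> 3"
  using mpos by (metis One_nat_def Suc_leI power_increasing power_one_right zero_less_numeral)

lemma fermat: "(x::'a)^(3^(2*m)) = x"
proof (cases "x = 0")
  case False
  have "x * (\<Prod>y\<in>UNIV-{0}. x * y) = x * x ^ (card (UNIV :: 'a set) - 1) * \<Prod>(UNIV-{0})"
    by (simp add: prod.distrib mult_ac)
  also have "x * x ^ (card (UNIV :: 'a set) - 1) = x ^ Suc (card (UNIV :: 'a set) - 1)"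
    by (subst power_Suc) auto
  also have "Suc (card (UNIV :: 'a set) - 1) = card (UNIV :: 'a set)"
    using finite_UNIV_card_ge_0[where ?'a = 'a] by simp
  also have "(\<Prod>y\<in>UNIV-{0}. x * y) = (\<Prod>y\<in>UNIV-{0}. y)"
    by (rule prod.reindex_bij_witness[of _ "\<lambda>y. y / x" "\<lambda>y. x * y"]) (use False in auto)
  finally show ?thesis
    by (simp add: cardF)
qed (use mpos in auto)

lemma fermat1: "(x::'a) \<noteq> 0 \<Longrightarrow> x^(3^(2*m) - 1) = 1"
proof -
  assume "x \<noteq> 0"
  have "x^(3^(2*m) - 1) * x = x^(3^(2*m))" by (rule power_minus_mult) simp
  hence "x * x^(3^(2*m) - 1) = x * 1" using fermat by (simp add: mult.commute)
  thus ?thesis using \<open>x \<noteq> 0\<close> by simp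
qed

lemma fermat_q: "((x::'a)^(3^m))^(3^m) = x"
proof -
  have "((x::'a)^(3^m))^(3^m) = x^(3^(2*m))" by (metis q2 power_mult)
  thus ?thesis using fermat by simp
qed

definition Fq :: "'a set" where "Fq = {x. x^(3^m) = x}"
definition U :: "'a set" where "U = {u. u^(3^m+1) = 1}"
definition E :: "'a \<Rightarrow> 'a set" where "E u = {x. x \<noteq> 0 \<and> x^(3^m-1) = u}"

lemma tr_add: "tr k (x + y :: 'a) = tr k x + tr k y"
  unfolding tr_def by (simp add: frob sum.distrib)

lemma tr_neg: "tr k (- x :: 'a) = - tr k x"
  unfolding tr_def by (simp add: sum_negf)

lemma tr_0: "tr k (0::'a) = 0"
  unfolding tr_def by (simp add: power_0_left)

lemma tr_sum: "tr k (sum f A :: 'a) = sum (\<lambda>i. tr k (f i)) A"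
  unfolding tr_def by (simp add: frob_sum sum.swap[of _ "{..<k}"])

lemma tr_split: "tr (2*m) (w::'a) = tr m (w + w^(3^m))"
proof -
  have "tr (2*m) w = (\<Sum>j<m+m. w^(3^j))" by (simp add: tr_def mult_2)
  also have "\<dots> = (\<Sum>j<m. w^(3^j)) + (\<Sum>j<m. w^(3^(m+j)))" by (rule sum_lessThan_add_split)
  also have "\<dots> = (\<Sum>j<m. w^(3^j) + (w^(3^m))^(3^j))"
    by (simp add: sum.distrib power_add power_mult)
  also have "\<dots> = tr m (w + w^(3^m))" by (simp add: tr_def frob)
  finally show ?thesis .
qed

lemma cube_pf: "(t::'a)^3 = t \<Longrightarrow> t \<in> prime_field"
proof -
  assume "t^3 = t"
  hence "t * (t - 1) * (t + 1) = 0" by (simp add: algebra_simps power3_eq_cube)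
  hence "t = 0 \<or> t = 1 \<or> t = -1" by (auto simp: eq_neg_iff_add_eq_0)
  moreover have "(-1::'a) = of_nat 2"
    using three0 by (simp add: eq_neg_iff_add_eq_0)
  ultimately show ?thesis unfolding prime_field_def
    by (elim disjE) (rule CollectI, rule exI[of _ 0], simp, rule CollectI, rule exI[of _ 1], simp,
        rule CollectI, rule exI[of _ 2], simp)
qed

lemma tm_cube: "x \<in> Fq \<Longrightarrow> (tr m x)^3 = tr m x"
proof -
  assume x: "x \<in> Fq"
  have 1: "(tr m x)^3 = (\<Sum>j<m. (x^(3^j))^3)"
    using frob_sum[of "\<lambda>j. x^(3^j)" "{..<m}" 1] by (simp add: tr_def)
  have 2: "(x^(3^j))^3 = x^(3^(Suc j))" for j by (simp add: power_mult[symmetric] mult.commute)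
  have 3: "(\<Sum>j<Suc m. x^(3^j)) = x + (\<Sum>j<m. x^(3^(Suc j)))" unfolding sum.lessThan_Suc_shift by simp
  have 4: "(\<Sum>j<Suc m. x^(3^j)) = tr m x + x" using x by (simp add: tr_def Fq_def)
  show ?thesis using 1 2 3 4 by (simp add: add.commute)
qed

lemma tm_pf: "x \<in> Fq \<Longrightarrow> tr m x \<in> prime_field"
  using tm_cube cube_pf by blast

lemma Fq_frob: "(w::'a) + w^(3^m) \<in> Fq"
  unfolding Fq_def by (simp add: frob fermat_q)

lemma tn_pf: "tr (2*m) (w::'a) \<in> prime_field"
  using tr_split tm_pf Fq_frob by simp

end


context FF begin

lemma pf_range: "prime_field = range (of_nat :: nat \<Rightarrow> 'a)"
proof -
  have "(of_nat k::'a) \<in> prime_field" for k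
    unfolding prime_field_def using ofnat_mod[of k] by (intro CollectI exI[of _ "k mod 3"]) auto
  thus ?thesis unfolding prime_field_def by auto
qed

lemma chi_ofnat: "chi (of_nat k :: 'a) = omega ^ k"
proof -
  have "chi (of_nat k :: 'a) = (\<Sum>j<3. if j = k mod 3 then omega^j else 0)"
    unfolding chi_def by (rule sum.cong) (auto simp: ofnat_eq)
  also have "\<dots> = omega^(k mod 3)" by (simp add: sum.delta)
  finally show ?thesis using omega_pow_mod by simp
qed

lemma chi_0: "chi (0::'a) = 1"
  using chi_ofnat[of 0] by simp

lemma neg_ofnat: "- (of_nat i :: 'a) = of_nat (2*i)"
proof -
  have "of_nat (2*i) + of_nat i = (of_nat (3*i) :: 'a)" by simp
  also have "\<dots> = 0" using three0 by simp
  finally show ?thesis by (simp add: eq_neg_iff_add_eq_0)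
qed

lemma pf_add: "s \<in> prime_field \<Longrightarrow> t \<in> prime_field \<Longrightarrow> (s + t::'a) \<in> prime_field"
  unfolding pf_range by (auto simp flip: of_nat_add)

lemma pf_neg: "t \<in> prime_field \<Longrightarrow> (- t::'a) \<in> prime_field"
proof -
  assume "t \<in> prime_field"
  then obtain i where "t = of_nat i" unfolding pf_range by auto
  hence "- t = of_nat (2*i)" using neg_ofnat by simp
  thus ?thesis unfolding pf_range by (metis rangeI)
qed

lemma pf_diff: "s \<in> prime_field \<Longrightarrow> t \<in> prime_field \<Longrightarrow> (s - t::'a) \<in> prime_field"
  using pf_add pf_neg by (metis diff_conv_add_uminus)

lemma chi_add: "s \<in> prime_field \<Longrightarrow> t \<in> prime_field \<Longrightarrow> chi (s + t::'a) = chi s * chi t"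
  unfolding pf_range by (auto simp flip: of_nat_add simp: chi_ofnat power_add)

lemma chi_vals: "t \<in> prime_field \<Longrightarrow> chi (t::'a) \<in> {1, omega, omega^2}"
proof -
  assume "t \<in> prime_field"
  then obtain k where k: "k < 3" "t = of_nat k" unfolding prime_field_def by auto
  hence "k = 0 \<or> k = 1 \<or> k = 2" by auto
  thus ?thesis using k chi_ofnat by auto
qed

lemma chi_ne1: "t \<in> prime_field \<Longrightarrow> t \<noteq> 0 \<Longrightarrow> chi (t::'a) \<noteq> 1"
proof -
  assume "t \<in> prime_field" "t \<noteq> 0"
  then obtain k where k: "k < 3" "t = of_nat k" unfolding prime_field_def by auto
  have "k \<noteq> 0"
  proof
    assume "k = 0" thus False using k \<open>t \<noteq> 0\<close> by simp
  qed
  hence "k = 1 \<or> k = 2" using k by auto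
  thus ?thesis using k chi_ofnat omega_ne1 by auto
qed

lemma roots_bound: "k > 0 \<Longrightarrow> card {x::'a. x^k = c} \<le> k"
proof -
  assume k: "k > 0"
  define p where "p = monom (1::'a) k + [:-c:]"
  have dm: "degree (monom (1::'a) k) = k" by (simp add: degree_monom_eq)
  have dp: "degree p = k" unfolding p_def
    by (subst degree_add_eq_left) (use k dm in auto)
  have "p \<noteq> 0" using dp k by auto
  hence "card {x. poly p x = 0} \<le> degree p" by (rule card_poly_roots_bound)
  moreover have "{x. poly p x = 0} = {x::'a. x^k = c}"
    unfolding p_def by (auto simp: poly_monom)
  ultimately show ?thesis using dp by simp
qed

lemma U_nz: "u \<in> U \<Longrightarrow> u \<noteq> 0"
  unfolding U_def by auto

lemma U_img: "(x::'a) \<noteq> 0 \<Longrightarrow> x^(3^m-1) \<in> U"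
proof -
  assume x: "x \<noteq> 0"
  have "(3^m - 1) * (3^m + 1) = 3^(2*m) - (1::nat)"
  proof -
    obtain r where r: "(3::nat)^m = Suc r" using qge3 by (metis Suc_pred' less_le_trans zero_less_numeral numeral_3_eq_3 Suc_le_lessD less_Suc_eq_0_disj)
    show ?thesis unfolding q2 r by simp
  qed
  note e = this
  have "(x^(3^m-1))^(3^m+1) = x^((3^m-1)*(3^m+1))" by (simp only: power_mult)
  also have "\<dots> = x^(3^(2*m)-1)" by (simp only: e)
  finally have "(x^(3^m-1))^(3^m+1) = x^(3^(2*m)-1)" .
  thus ?thesis using fermat1[OF x] unfolding U_def by simp
qed

lemma fq_iff: "(x::'a) \<noteq> 0 \<Longrightarrow> (x \<in> Fq \<longleftrightarrow> x^(3^m-1) = 1)"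
proof -
  assume x: "x \<noteq> 0"
  have "x^(3^m-1) * x = x^(3^m)" by (rule power_minus_mult) simp
  thus ?thesis unfolding Fq_def using x
    by (auto simp: mult_cancel_right2)
qed

lemma counts: "card U = 3^m + 1 \<and> (\<forall>u\<in>U. card (E u) = 3^m - 1)"
proof -
  define q :: nat where "q = 3^m"
  have q3: "q \<ge> 3" using qge3 q_def by simp
  have S: "card (UNIV - {0::'a}) = (\<Sum>u\<in>U. card (E u))"
  proof -
    have "(\<Sum>u\<in>U. \<Sum>x\<in>{x. x \<in> UNIV - {0::'a} \<and> x^(3^m-1) = u}. 1::nat) = (\<Sum>x\<in>UNIV - {0::'a}. 1)"
    proof (rule sum.group)
      show "(\<lambda>x. x^(3^m-1)) ` (UNIV - {0::'a}) \<subseteq> U" using U_img by auto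
    qed auto
    moreover have "{x. x \<in> UNIV - {0::'a} \<and> x^(3^m-1) = u} = E u" for u
      unfolding E_def by auto
    ultimately show ?thesis by simp
  qed
  have c0: "card (UNIV - {0::'a}) = q*q - 1"
    using cardF by (simp add: card_Diff_singleton q2 q_def)
  have le: "card (E u) \<le> q - 1" for u
  proof -
    have "card (E u) \<le> card {x::'a. x^(q-1) = u}"
      by (rule card_mono) (auto simp: E_def q_def)
    also have "\<dots> \<le> q - 1" by (rule roots_bound) (use q3 in auto)
    finally show ?thesis .
  qed
  have cU: "card U \<le> q + 1"
    unfolding U_def q_def by (rule roots_bound) simp
  have "(\<Sum>u\<in>U. card (E u)) \<le> card U * (q - 1)"
    using sum_bounded_above[of U "\<lambda>u. card (E u)" "q-1"] le by simp
  hence A: "(q+1)*(q-1) \<le> card U * (q - 1)" using S c0 by (simp add: algebra_simps)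
  have qm: "0 < q - 1" using q3 by simp
  have "q + 1 \<le> card U" using mult_le_cancel2[of "q+1" "q-1" "card U"] A qm by blast
  hence cU': "card U = q + 1" using cU by simp
  have "\<forall>u\<in>U. card (E u) = q - 1"
  proof (rule ccontr)
    assume "\<not> ?thesis"
    then obtain u0 where "u0 \<in> U" "card (E u0) \<noteq> q - 1" by auto
    with le have "card (E u0) < q - 1" using le_neq_implies_less by blast
    hence "(\<Sum>u\<in>U. card (E u)) < (\<Sum>u\<in>U. q - 1)"
      using \<open>u0 \<in> U\<close> le by (intro sum_strict_mono_ex1) auto
    thus False using S c0 cU' by (simp add: algebra_simps)
  qed
  thus ?thesis using cU' q_def by simp
qed

lemma card_U: "card U = 3^m + 1" using counts by simp
lemma card_E: "u \<in> U \<Longrightarrow> card (E u) = 3^m - 1" using counts by simp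

lemma E1: "E 1 = Fq - {0}"
  unfolding E_def using fq_iff by auto

lemma zero_Fq: "(0::'a) \<in> Fq"
  unfolding Fq_def using mpos by simp

lemma card_Fq: "card Fq = 3^m"
proof -
  have "1 \<in> U" unfolding U_def by simp
  hence "card (E 1) = 3^m - 1" by (rule card_E)
  hence "card (Fq - {0}) = 3^m - 1" unfolding E1 .
  hence "card Fq - 1 = 3^m - 1" using zero_Fq by (simp add: card_Diff_singleton)
  moreover have "card Fq > 0" using zero_Fq by (auto simp: card_gt_0_iff)
  ultimately show ?thesis using qge3 by linarith
qed

lemma two_ne0: "(2::'a) \<noteq> 0"
  using ofnat_eq[of 2 0] by simp

lemma one_ne_m1: "(1::'a) \<noteq> -1"
  using two_ne0 by (metis add_eq_0_iff2 one_add_one)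

lemma one_U: "1 \<in> U" unfolding U_def by simp

lemma m1_U: "-1 \<in> U"
proof -
  have "even ((3::nat)^m + 1)" by simp
  thus ?thesis unfolding U_def by simp
qed

lemma E_param: "u \<in> U \<Longrightarrow> v \<in> E u \<Longrightarrow> E u = (\<lambda>y. v*y) ` (Fq - {0})"
proof -
  assume u: "u \<in> U" and v: "v \<in> E u"
  have v0: "v \<noteq> 0" and vu: "v^(3^m-1) = u" using v unfolding E_def by auto
  have u0: "u \<noteq> 0" using U_nz u by auto
  show ?thesis
  proof
    show "E u \<subseteq> (\<lambda>y. v*y) ` (Fq - {0})"
    proof
      fix x assume "x \<in> E u"
      hence x0: "x \<noteq> 0" and xu: "x^(3^m-1) = u" unfolding E_def by auto
      have "(x/v)^(3^m-1) = 1" using xu vu u0 by (simp add: power_divide)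
      hence "x/v \<in> Fq - {0}" using fq_iff x0 v0 by auto
      moreover have "x = v * (x/v)" using v0 by simp
      ultimately show "x \<in> (\<lambda>y. v*y) ` (Fq - {0})" by blast
    qed
  next
    show "(\<lambda>y. v*y) ` (Fq - {0}) \<subseteq> E u"
    proof
      fix x assume "x \<in> (\<lambda>y. v*y) ` (Fq - {0})"
      then obtain y where y: "y \<in> Fq" "y \<noteq> 0" "x = v*y" by auto
      have "y^(3^m-1) = 1" using fq_iff y by auto
      thus "x \<in> E u" unfolding E_def using y v0 vu by (simp add: power_mult_distrib)
    qed
  qed
qed

lemma E_nonempty: "u \<in> U \<Longrightarrow> \<exists>v. v \<in> E u"
proof -
  assume "u \<in> U"
  hence "card (E u) > 0" using card_E qge3 by simp
  thus ?thesis by (metis card_0_eq finite ex_in_conv less_irrefl)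
qed

end


context FF begin

lemma Fq_mult: "x \<in> Fq \<Longrightarrow> y \<in> Fq \<Longrightarrow> x * y \<in> Fq"
  unfolding Fq_def by (simp add: power_mult_distrib)
lemma Fq_add: "x \<in> Fq \<Longrightarrow> y \<in> Fq \<Longrightarrow> x + y \<in> Fq"
  unfolding Fq_def by (simp add: frob)
lemma Fq_neg: "x \<in> Fq \<Longrightarrow> - x \<in> Fq"
  unfolding Fq_def by simp
lemma Fq_diff: "x \<in> Fq \<Longrightarrow> y \<in> Fq \<Longrightarrow> x - y \<in> Fq"
  unfolding Fq_def by (simp add: frob_diff)
lemma Fq_inv: "x \<in> Fq \<Longrightarrow> inverse x \<in> Fq"
  unfolding Fq_def by (simp add: power_inverse)

lemma tm_nonzero: "\<exists>y\<in>Fq. tr m y \<noteq> 0"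
proof (rule ccontr)
  assume "\<not> ?thesis"
  hence all0: "\<forall>y\<in>Fq. tr m y = 0" by auto
  define p :: "'a poly" where "p = (\<Sum>j<m. monom 1 (3^j))"
  have pv: "poly p x = tr m x" for x unfolding p_def tr_def by (simp add: poly_sum poly_monom)
  have dp: "degree p \<le> 3^(m-1)" unfolding p_def
  proof (rule degree_sum_le)
    fix j assume "j \<in> {..<m}"
    hence "3^j \<le> (3::nat)^(m-1)" by (intro power_increasing) auto
    thus "degree (monom (1::'a) (3^j)) \<le> 3^(m-1)" by (simp add: degree_monom_eq)
  qed simp
  have "coeff p (3^(m-1)) = (\<Sum>j<m. if 3^j = (3::nat)^(m-1) then 1 else 0)"
    unfolding p_def by (simp add: coeff_sum coeff_monom)
  also have "\<dots> = (\<Sum>j<m. if j = m-1 then 1 else 0)"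
    by (rule sum.cong) auto
  also have "\<dots> = 1" using mpos by simp
  finally have "p \<noteq> 0" by auto
  hence "card {x. poly p x = 0} \<le> degree p" by (rule card_poly_roots_bound)
  moreover have "Fq \<subseteq> {x. poly p x = 0}" using all0 pv by auto
  hence "card Fq \<le> card {x. poly p x = 0}" by (intro card_mono) auto
  ultimately have "(3::nat)^m \<le> 3^(m-1)" using dp card_Fq by linarith
  moreover have "(3::nat)^(m-1) < 3^m" using mpos by (intro power_strict_increasing) auto
  ultimately show False by linarith
qed

lemma sum_chi_tm: "(\<Sum>y\<in>Fq. chi (tr m y)) = 0"
proof -
  obtain y0 where y0: "y0 \<in> Fq" "tr m y0 \<noteq> 0" using tm_nonzero by auto
  define S where "S = (\<Sum>y\<in>Fq. chi (tr m y))"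
  have "S = (\<Sum>y\<in>Fq. chi (tr m (y + y0)))"
    unfolding S_def
    by (rule sum.reindex_bij_witness[where j="\<lambda>y. y - y0" and i="\<lambda>y. y + y0"])
       (auto simp: y0 Fq_add Fq_diff)
  also have "\<dots> = (\<Sum>y\<in>Fq. chi (tr m y) * chi (tr m y0))"
    by (rule sum.cong) (auto simp: tr_add chi_add tm_pf y0)
  also have "\<dots> = S * chi (tr m y0)" unfolding S_def by (simp add: sum_distrib_right)
  finally have "S * (1 - chi (tr m y0)) = 0" by (simp add: algebra_simps)
  moreover have "chi (tr m y0) \<noteq> 1" using chi_ne1 tm_pf y0 by auto
  ultimately show ?thesis unfolding S_def by simp
qed

lemma orth: "d \<in> Fq \<Longrightarrow> (\<Sum>y\<in>Fq. chi (tr m (d*y))) = (if d = 0 then of_nat (3^m) else 0)"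
proof (cases "d = 0")
  case True
  thus ?thesis by (simp add: tr_0 chi_0 card_Fq)
next
  case False
  assume d: "d \<in> Fq"
  have "(\<Sum>y\<in>Fq. chi (tr m (d*y))) = (\<Sum>y\<in>Fq. chi (tr m y))"
    by (rule sum.reindex_bij_witness[where i="\<lambda>y. y / d" and j="\<lambda>y. d * y"])
       (use False d in \<open>auto simp: Fq_mult Fq_inv divide_inverse\<close>)
  thus ?thesis using sum_chi_tm False by simp
qed

lemma tr_split_Fq: "y \<in> Fq \<Longrightarrow> tr (2*m) (w * y) = tr m ((w + w^(3^m)) * y)"
  unfolding tr_split by (simp add: Fq_def power_mult_distrib algebra_simps)

lemma inner_sum:
  assumes u: "u \<in> U"
  shows "(\<Sum>x\<in>E u. chi (- tr (2*m) (l*x))) =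
           (if l = 0 \<or> l^(3^m-1) * u = -1 then of_nat (3^m) else 0) - 1"
proof -
  obtain v where v: "v \<in> E u" using E_nonempty u by auto
  have v0: "v \<noteq> 0" and vu: "v^(3^m-1) = u" using v unfolding E_def by auto
  define c where "c = l*v + (l*v)^(3^m)"
  have cF: "c \<in> Fq" unfolding c_def by (rule Fq_frob)
  have "(\<Sum>x\<in>E u. chi (- tr (2*m) (l*x))) = (\<Sum>y\<in>Fq-{0}. chi (- tr (2*m) (l*(v*y))))"
    unfolding E_param[OF u v] by (subst sum.reindex) (auto simp: inj_on_def v0)
  also have "\<dots> = (\<Sum>y\<in>Fq-{0}. chi (tr m ((-c)*y)))"
  proof (rule sum.cong[OF refl])
    fix y assume "y \<in> Fq - {0}"
    hence "tr (2*m) ((l*v)*y) = tr m (c*y)" using tr_split_Fq[of y "l*v"] by (simp add: c_def)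
    hence "tr (2*m) (l*(v*y)) = tr m (c*y)" by (simp add: mult.assoc)
    thus "chi (- tr (2*m) (l*(v*y))) = chi (tr m ((-c)*y))" by (simp add: tr_neg)
  qed
  also have "\<dots> = (\<Sum>y\<in>Fq. chi (tr m ((-c)*y))) - chi (tr m ((-c) * 0))"
    using sum.remove[of Fq 0 "\<lambda>y. chi (tr m ((-c)*y))"] zero_Fq by simp
  also have "\<dots> = (if c = 0 then of_nat (3^m) else 0) - 1"
    using orth[OF Fq_neg[OF cF]] by (simp add: tr_0 chi_0)
  also have "(c = 0) \<longleftrightarrow> (l = 0 \<or> l^(3^m-1) * u = -1)"
  proof (cases "l = 0")
    case True thus ?thesis by (simp add: c_def)
  next
    case False
    hence lv: "l * v \<noteq> 0" using v0 by simp
    have pw: "(l*v)^(3^m) = (l*v)^(3^m-1) * (l*v)" by (rule power_minus_mult[symmetric]) simp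
    have "c = 0 \<longleftrightarrow> (l*v)^(3^m) = - (l*v)" unfolding c_def by (simp add: eq_neg_iff_add_eq_0 add.commute)
    also have "\<dots> \<longleftrightarrow> (l*v)^(3^m-1) * (l*v) = (-1) * (l*v)" unfolding pw by simp
    also have "\<dots> \<longleftrightarrow> (l*v)^(3^m-1) = -1" using lv by (simp only: mult_cancel_right) simp
    also have "\<dots> \<longleftrightarrow> l^(3^m-1) * u = -1" by (simp only: power_mult_distrib vu)
    finally show ?thesis using False by simp
  qed
  finally show ?thesis .
qed

lemma walsh_formula:
  assumes fdef: "\<And>x. x \<noteq> 0 \<Longrightarrow> f x = g (x^(3^m-1))" and f0: "f 0 = 0"
    and gpf: "\<And>u. u \<in> U \<Longrightarrow> g u \<in> prime_field"
  shows "walsh (2*m) f l = 1 + (\<Sum>u\<in>U. chi (g u) *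
            ((if l = 0 \<or> l^(3^m-1) * u = -1 then of_nat (3^m) else 0) - 1))"
proof -
  have "walsh (2*m) f l = chi (f 0 - tr (2*m) (l*0)) + (\<Sum>x\<in>UNIV-{0}. chi (f x - tr (2*m) (l*x)))"
    unfolding walsh_def by (rule sum.remove) auto
  also have "chi (f 0 - tr (2*m) (l*0)) = 1" by (simp add: f0 tr_0 chi_0)
  also have "(\<Sum>x\<in>UNIV-{0}. chi (f x - tr (2*m) (l*x))) =
       (\<Sum>u\<in>U. \<Sum>x\<in>{x. x \<in> UNIV - {0::'a} \<and> x^(3^m-1) = u}. chi (f x - tr (2*m) (l*x)))"
  proof (rule sum.group[symmetric])
    show "(\<lambda>x. x^(3^m-1)) ` (UNIV - {0::'a}) \<subseteq> U" using U_img by auto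
  qed auto
  also have "\<dots> = (\<Sum>u\<in>U. \<Sum>x\<in>E u. chi (g u) * chi (- tr (2*m) (l*x)))"
  proof (rule sum.cong[OF refl])
    fix u assume u: "u \<in> U"
    have "{x. x \<in> UNIV - {0::'a} \<and> x^(3^m-1) = u} = E u" unfolding E_def by auto
    moreover have "chi (f x - tr (2*m) (l*x)) = chi (g u) * chi (- tr (2*m) (l*x))" if "x \<in> E u" for x
    proof -
      have "f x = g u" using that fdef unfolding E_def by auto
      thus ?thesis using chi_add[OF gpf[OF u] pf_neg[OF tn_pf]] by simp
    qed
    ultimately show "(\<Sum>x\<in>{x. x \<in> UNIV - {0::'a} \<and> x^(3^m-1) = u}. chi (f x - tr (2*m) (l*x))) =
        (\<Sum>x\<in>E u. chi (g u) * chi (- tr (2*m) (l*x)))" by (intro sum.cong) auto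
  qed
  also have "\<dots> = (\<Sum>u\<in>U. chi (g u) * ((if l = 0 \<or> l^(3^m-1) * u = -1 then of_nat (3^m) else 0) - 1))"
    by (rule sum.cong[OF refl]) (simp add: sum_distrib_left[symmetric] inner_sum)
  finally show ?thesis .
qed

end


context FF begin

lemma quad_roots: "card {w::'a. w*w - c*w + b = 0} \<le> 2"
proof -
  define p where "p = [:b, -c, 1::'a:]"
  have "p \<noteq> 0" unfolding p_def by simp
  hence "card {x. poly p x = 0} \<le> degree p" by (rule card_poly_roots_bound)
  moreover have "degree p = 2" unfolding p_def by simp
  moreover have "{x. poly p x = 0} = {w::'a. w*w - c*w + b = 0}"
    unfolding p_def by (auto simp: algebra_simps)
  ultimately show ?thesis by simp
qed

lemma sum_le_eq:
  fixes h :: "'b \<Rightarrow> nat"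
  assumes "finite C" "\<And>c. c \<in> C \<Longrightarrow> h c \<le> 2" "(\<Sum>c\<in>C. h c) = 2 * card C"
  shows "\<And>c. c \<in> C \<Longrightarrow> h c = 2"
proof (rule ccontr)
  fix c assume c: "c \<in> C" "h c \<noteq> 2"
  hence "h c < 2" using assms(2) le_neq_implies_less by blast
  hence "(\<Sum>c\<in>C. h c) < (\<Sum>c\<in>C. 2)" using assms c by (intro sum_strict_mono_ex1) auto
  thus False using assms by simp
qed

lemma group_card:
  assumes "\<And>x. x \<in> S \<Longrightarrow> phi x \<in> Fq"
  shows "(\<Sum>c\<in>Fq. card {x \<in> S. phi x = c}) = card (S::'a set)"
proof -
  have "(\<Sum>c\<in>Fq. \<Sum>x\<in>{x. x \<in> S \<and> phi x = c}. 1::nat) = (\<Sum>x\<in>S. 1)"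
  proof (rule sum.group)
    show "phi ` S \<subseteq> Fq" using assms by auto
  qed auto
  thus ?thesis by simp
qed

lemma group_chi:
  fixes S :: "'a set"
  assumes "\<And>x. x \<in> S \<Longrightarrow> phi x \<in> Fq"
  shows "(\<Sum>x\<in>S. chi (tr m (phi x))) = (\<Sum>c\<in>Fq. of_nat (card {x \<in> S. phi x = c}) * chi (tr m c))"
proof -
  have "(\<Sum>c\<in>Fq. \<Sum>x\<in>{x. x \<in> S \<and> phi x = c}. chi (tr m (phi x))) = (\<Sum>x\<in>(S::'a set). chi (tr m (phi x)))"
  proof (rule sum.group)
    show "phi ` S \<subseteq> Fq" using assms by auto
  qed auto
  moreover have "(\<Sum>x\<in>{x. x \<in> S \<and> phi x = c}. chi (tr m (phi x))) = of_nat (card {x \<in> S. phi x = c}) * chi (tr m c)" for c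
  proof -
    have "(\<Sum>x\<in>{x. x \<in> S \<and> phi x = c}. chi (tr m (phi x))) = (\<Sum>x\<in>{x. x \<in> S \<and> phi x = c}. chi (tr m c))"
      by (rule sum.cong) auto
    thus ?thesis by simp
  qed
  ultimately show ?thesis by simp
qed

lemma kloost_id:
  assumes a: "(a::'a) \<noteq> 0"
  shows "(\<Sum>u\<in>U. chi (tr (2*m) (a*u))) = 1 - kloosterman m (a^(3^m+1))"
proof -
  define b where "b = a^(3^m+1)"
  define B where "B = {w::'a. w^(3^m+1) = b}"
  define A where "A = Fq - {0}"
  define phi where "phi = (\<lambda>w::'a. w + w^(3^m))"
  define psi where "psi = (\<lambda>y::'a. y + b/y)"
  have b0: "b \<noteq> 0" unfolding b_def using a by simp
  have bF: "b \<in> Fq"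
  proof -
    have be: "b = a^(3^m) * a" unfolding b_def by simp
    hence "b^(3^m) = (a^(3^m))^(3^m) * a^(3^m)" by (simp add: power_mult_distrib)
    also have "\<dots> = a * a^(3^m)" by (simp add: fermat_q)
    also have "\<dots> = b" using be by (simp add: mult.commute)
    finally show ?thesis unfolding Fq_def by simp
  qed
  have pwq: "w^(3^m+1) = w^(3^m) * w" for w :: 'a by simp
  have BU: "B = (\<lambda>u. a*u) ` U"
  proof
    show "(\<lambda>u. a*u) ` U \<subseteq> B" unfolding B_def U_def b_def by (auto simp: power_mult_distrib)
    show "B \<subseteq> (\<lambda>u. a*u) ` U"
    proof
      fix w assume "w \<in> B"
      hence "(w/a)^(3^m+1) = 1" unfolding B_def using b0 by (simp add: power_divide b_def)
      hence "w/a \<in> U" unfolding U_def by simp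
      moreover have "w = a * (w/a)" using a by simp
      ultimately show "w \<in> (\<lambda>u. a*u) ` U" by blast
    qed
  qed
  have cardB: "card B = 3^m + 1"
    unfolding BU using card_U a by (subst card_image) (auto simp: inj_on_def)
  have cardA: "card A = 3^m - 1" unfolding A_def using card_Fq zero_Fq by (simp add: card_Diff_singleton)
  have phiF: "phi w \<in> Fq" for w unfolding phi_def by (rule Fq_frob)
  have psiF: "y \<in> A \<Longrightarrow> psi y \<in> Fq" for y
    unfolding psi_def A_def using bF by (auto intro!: Fq_add Fq_mult Fq_inv simp: divide_inverse)
  have S1: "(\<Sum>u\<in>U. chi (tr (2*m) (a*u))) = (\<Sum>w\<in>B. chi (tr m (phi w)))"
    unfolding BU by (subst sum.reindex) (auto simp: inj_on_def a tr_split phi_def)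
  have q2pos: "3^m - 2 > (0::nat)" using qge3 by simp
  have inv: "x \<in> A \<Longrightarrow> x^(3^m-2) = inverse x" for x
  proof -
    assume x: "x \<in> A"
    hence x0: "x \<noteq> 0" and "x^(3^m-1) = 1" unfolding A_def using fq_iff by auto
    moreover have "x^(3^m-1) = x^(3^m-2) * x"
    proof -
      have "3^m - 1 = Suc (3^m - 2)" using qge3 by simp
      thus ?thesis by simp
    qed
    ultimately show ?thesis by (simp add: field_simps)
  qed
  have "kloosterman m b = (\<Sum>x\<in>Fq. chi (tr m (b*x + x^(3^m-2))))"
    unfolding kloosterman_def subfield_pow_def Fq_def by simp
  also have "\<dots> = chi (tr m (b*0 + 0^(3^m-2))) + (\<Sum>x\<in>A. chi (tr m (b*x + x^(3^m-2))))"
    unfolding A_def by (rule sum.remove) (auto simp: zero_Fq)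
  also have "chi (tr m (b*0 + 0^(3^m-2))) = 1" using q2pos by (simp add: tr_0 chi_0 power_0_left)
  also have "(\<Sum>x\<in>A. chi (tr m (b*x + x^(3^m-2)))) = (\<Sum>x\<in>A. chi (tr m (psi (b*x))))"
    by (rule sum.cong) (auto simp: inv psi_def b0 inverse_eq_divide)
  also have "\<dots> = (\<Sum>y\<in>A. chi (tr m (psi y)))"
    by (rule sum.reindex_bij_witness[where i="\<lambda>y. y / b" and j="\<lambda>x. b * x"])
       (use b0 bF in \<open>auto simp: A_def Fq_mult Fq_inv divide_inverse\<close>)
  finally have S2: "kloosterman m b = 1 + (\<Sum>y\<in>A. chi (tr m (psi y)))" .
  define Bc where "Bc = (\<lambda>c. {w \<in> B. phi w = c})"
  define Ac where "Ac = (\<lambda>c. {y \<in> A. psi y = c})"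
  have le2: "card (Bc c) + card (Ac c) \<le> 2" for c
  proof -
    define R where "R = {w::'a. w*w - c*w + b = 0}"
    have cR: "card R \<le> 2" unfolding R_def by (rule quad_roots)
    have BR: "Bc c \<subseteq> R"
    proof
      fix w assume "w \<in> Bc c"
      hence "w^(3^m+1) = b" "w + w^(3^m) = c" unfolding Bc_def B_def phi_def by auto
      hence "w*w - c*w + b = 0" using pwq[of w] by (auto simp: algebra_simps)
      thus "w \<in> R" unfolding R_def by simp
    qed
    have AR: "Ac c \<subseteq> R"
    proof
      fix w assume "w \<in> Ac c"
      hence "w \<noteq> 0" "w + b/w = c" unfolding Ac_def A_def psi_def by auto
      hence "w*w - c*w + b = 0" by (auto simp: field_simps)
      thus "w \<in> R" unfolding R_def by simp
    qed
    show ?thesis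
    proof (cases "Bc c \<inter> Ac c = {}")
      case True
      hence "card (Bc c) + card (Ac c) = card (Bc c \<union> Ac c)" by (simp add: card_Un_disjoint)
      also have "\<dots> \<le> card R" using BR AR by (intro card_mono) auto
      finally show ?thesis using cR by simp
    next
      case False
      then obtain w0 where w0: "w0 \<in> Bc c" "w0 \<in> Ac c" by auto
      have wq: "w0^(3^m) = w0" using w0 unfolding Ac_def A_def Fq_def by auto
      have "w0^(3^m+1) = b" using w0 unfolding Bc_def B_def by auto
      hence wb: "w0 * w0 = b" using pwq[of w0] wq by simp
      have wc: "c = w0 + w0" using w0 wq unfolding Bc_def phi_def by auto
      have "R \<subseteq> {w0}"
      proof
        fix w assume "w \<in> R"
        hence "(w - w0) * (w - w0) = 0" unfolding R_def using wb wc by (simp add: algebra_simps)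
        thus "w \<in> {w0}" by simp
      qed
      hence "card (Bc c) \<le> 1" "card (Ac c) \<le> 1" using BR AR
        by (metis card.empty card.insert card_mono empty_iff finite finite.emptyI subset_trans le_SucI One_nat_def)+
      thus ?thesis by simp
    qed
  qed
  have tot: "(\<Sum>c\<in>Fq. card (Bc c) + card (Ac c)) = 2 * card Fq"
  proof -
    have "(\<Sum>c\<in>Fq. card (Bc c)) = card B" unfolding Bc_def by (rule group_card) (rule phiF)
    moreover have "(\<Sum>c\<in>Fq. card (Ac c)) = card A" unfolding Ac_def by (rule group_card) (rule psiF)
    ultimately show ?thesis using cardA cardB card_Fq qge3 by (simp add: sum.distrib)
  qed
  have eq2: "c \<in> Fq \<Longrightarrow> card (Bc c) + card (Ac c) = 2" for c
    using sum_le_eq[of Fq "\<lambda>c. card (Bc c) + card (Ac c)"] le2 tot by auto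
  have "(\<Sum>w\<in>B. chi (tr m (phi w))) + (\<Sum>y\<in>A. chi (tr m (psi y))) =
        (\<Sum>c\<in>Fq. of_nat (card (Bc c)) * chi (tr m c)) + (\<Sum>c\<in>Fq. of_nat (card (Ac c)) * chi (tr m c))"
    unfolding Bc_def Ac_def using group_chi[of B phi] group_chi[of A psi] phiF psiF by simp
  also have "\<dots> = (\<Sum>c\<in>Fq. of_nat (card (Bc c) + card (Ac c)) * chi (tr m c))"
    by (simp add: sum.distrib algebra_simps)
  also have "\<dots> = (\<Sum>c\<in>Fq. 2 * chi (tr m c))"
    by (rule sum.cong) (auto simp: eq2)
  also have "\<dots> = 0" using sum_chi_tm by (simp add: sum_distrib_left[symmetric])
  finally have "(\<Sum>w\<in>B. chi (tr m (phi w))) = - (\<Sum>y\<in>A. chi (tr m (psi y)))"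
    by (simp add: eq_neg_iff_add_eq_0)
  thus ?thesis using S1 S2 unfolding b_def by simp
qed

end


lemma cube_diff: "c1 \<in> {1, omega, omega^2} \<Longrightarrow> c2 \<in> {1, omega, omega^2} \<Longrightarrow> c1 \<noteq> c2 \<Longrightarrow> cmod (c1 - c2) > 1"
proof -
  assume c: "c1 \<in> {1, omega, omega^2}" "c2 \<in> {1, omega, omega^2}" "c1 \<noteq> c2"
  define w where "w = Complex (-1/2) (sqrt 3 / 2)"
  define w2 where "w2 = Complex (-1/2) (- sqrt 3 / 2)"
  have s3: "sqrt 3 > (1::real)" by simp
  have re: "\<bar>Re z\<bar> > 1 \<Longrightarrow> cmod z > 1" for z using abs_Re_le_cmod[of z] by linarith
  have im: "\<bar>Im z\<bar> > 1 \<Longrightarrow> cmod z > 1" for z using abs_Im_le_cmod[of z] by linarith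
  have h1: "cmod (1 - w) > 1" by (rule re) (simp add: w_def)
  have h2: "cmod (1 - w2) > 1" by (rule re) (simp add: w2_def)
  have h3: "cmod (w - w2) > 1" by (rule im) (use s3 in \<open>simp add: w_def w2_def\<close>)
  have c'': "c1 \<in> {1, omega, Complex (-1/2) (- sqrt 3 / 2)}" "c2 \<in> {1, omega, Complex (-1/2) (- sqrt 3 / 2)}"
    using c unfolding omega2 by auto
  have c': "c1 \<in> {1, w, w2}" "c2 \<in> {1, w, w2}"
    using c'' unfolding omega_explicit w_def w2_def by auto
  have "w \<noteq> 1" "w2 \<noteq> 1" "w \<noteq> w2" by (auto simp: w_def w2_def complex_eq_iff)
  thus ?thesis using c' c(3) h1 h2 h3 norm_minus_commute[of 1 w] norm_minus_commute[of 1 w2]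
      norm_minus_commute[of w w2] by auto
qed

lemma cube_norm: "c \<in> {1, omega, omega^2} \<Longrightarrow> cmod c = 1"
  by (auto simp: omega_def norm_power)

context FF begin

lemma minus_one_powi_odd: "odd s \<Longrightarrow> (-1::'a) powi s = -1"
proof -
  assume "odd s"
  then obtain k where k: "s = 2*k + 1" by (metis oddE)
  have "(-1::'a) powi (2*k + 1) = (-1) powi (2*k) * (-1) powi 1"
    by (rule power_int_add) simp
  also have "(-1::'a) powi (2*k) = ((-1) powi 2) powi k" by (rule power_int_mult)
  also have "(-1::'a) powi 2 = 1" by simp
  finally show ?thesis using k by simp
qed

lemma geo: "((x::'a) - 1) * (\<Sum>i=1..N. x^i) = x^(N+1) - x"
  by (induction N) (auto simp: algebra_simps)

lemma U_powi: "u \<in> U \<Longrightarrow> u powi k \<in> U"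
proof -
  assume u: "u \<in> U"
  have "(u powi k)^(3^m+1) = u powi (k * int (3^m+1))" by (rule power_int_power')
  also have "k * int (3^m+1) = int (3^m+1) * k" by (rule mult.commute)
  also have "u powi (int (3^m+1) * k) = (u^(3^m+1)) powi k" by (rule power_int_power[symmetric])
  also have "\<dots> = 1" using u unfolding U_def by simp
  finally show ?thesis unfolding U_def by simp
qed

lemma U_powi_mod: "u \<in> U \<Longrightarrow> u powi (k + int (3^m+1) * j) = u powi k"
proof -
  assume u: "u \<in> U"
  hence u0: "u \<noteq> 0" by (rule U_nz)
  have "u powi (k + int (3^m+1) * j) = u powi k * u powi (int (3^m+1) * j)"
    by (rule power_int_add) (simp add: u0)
  also have "u powi (int (3^m+1) * j) = (u^(3^m+1)) powi j" by (rule power_int_power[symmetric])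
  also have "\<dots> = 1" using u unfolding U_def by simp
  finally show ?thesis by simp
qed

lemma reindex_powi:
  assumes g: "gcd s (3^m+1) = 1"
  shows "(\<Sum>u\<in>U. F (u powi s)) = (\<Sum>u\<in>U. F u)"
proof -
  obtain t k where tk: "t * s + k * (3^m+1) = (1::int)" using bezout_int[of s "3^m+1"] g by auto
  have inv: "(u powi s) powi t = u" "(u powi t) powi s = u" if u: "u \<in> U" for u
  proof -
    have e: "s * t = 1 + int (3^m+1) * (-k)" using tk by (simp add: algebra_simps)
    have "(u powi s) powi t = u powi (s*t)" by (rule power_int_mult[symmetric])
    also have "\<dots> = u" unfolding e using U_powi_mod[OF u, of 1 "-k"] by simp
    finally show "(u powi s) powi t = u" .
    have "(u powi t) powi s = u powi (s*t)" by (metis power_int_mult mult.commute)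
    also have "\<dots> = u" unfolding e using U_powi_mod[OF u, of 1 "-k"] by simp
    finally show "(u powi t) powi s = u" .
  qed
  show ?thesis
    by (rule sum.reindex_bij_witness[where j="\<lambda>u. u powi s" and i="\<lambda>u. u powi t"])
       (auto simp: inv U_powi)
qed

lemma main:
  fixes s :: int and a :: 'a and f :: "'a \<Rightarrow> 'a"
  assumes gs: "gcd s (3 ^ m + 1) = 1"
    and a0: "a \<noteq> 0"
    and fdef: "\<And>x. f x = (if x = 0 then 0 else
           (\<Sum>i = 1..(3 ^ m + 1) div 2 - 1.
              tr (2 * m) (a * x powi ((2 * int i + s) * (3 ^ m - 1)))))"
  shows "regular_bent (2 * m) f \<longleftrightarrow> kloosterman m (a ^ (3 ^ m + 1)) = 0"
proof -
  define N :: nat where "N = (3 ^ m + 1) div 2 - 1"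
  define g where "g = (\<lambda>u::'a. \<Sum>i = 1..N. tr (2 * m) (a * u powi (2 * int i + s)))"
  define G where "G = (\<lambda>u::'a. \<Sum>i = 1..N. u^(2*i))"
  have e1: "(3::int)^m - 1 = int (3^m - 1)" using qge3 by (simp add: of_nat_diff)
  have fg: "f x = g (x^(3^m-1))" if "x \<noteq> 0" for x
  proof -
    have "x powi ((2 * int i + s) * (3 ^ m - 1)) = (x^(3^m-1)) powi (2 * int i + s)" for i
      unfolding e1 by (simp add: power_int_power mult.commute)
    thus ?thesis using that by (simp add: fdef g_def N_def)
  qed
  have f0: "f 0 = 0" using fdef by simp
  have gtr: "g u = tr (2*m) (\<Sum>i = 1..N. a * u powi (2 * int i + s))" for u
    unfolding g_def by (simp add: tr_sum)
  have gpf: "g u \<in> prime_field" for u unfolding gtr by (rule tn_pf)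
  have gG: "g u = tr (2*m) (a * u powi s * G u)" if u: "u \<in> U" for u
  proof -
    have u0: "u \<noteq> 0" using U_nz u by simp
    have "u powi (2 * int i + s) = u powi s * u^(2*i)" for i
    proof -
      have "u powi (2 * int i + s) = u powi (2 * int i) * u powi s" by (rule power_int_add) (simp add: u0)
      moreover have "u powi (2 * int i) = u^(2*i)" using power_int_of_nat[of u "2*i"] by simp
      ultimately show ?thesis by (simp add: mult.commute)
    qed
    hence "(\<Sum>i = 1..N. a * u powi (2 * int i + s)) = a * u powi s * G u"
      unfolding G_def by (simp add: sum_distrib_left mult.assoc)
    thus ?thesis using gtr by simp
  qed
  have NN: "2 * (N + 1) = 3^m + 1"
  proof -
    have "odd ((3::nat)^m)" by simp
    hence "even ((3::nat)^m + 1)" by simp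
    thus ?thesis unfolding N_def using qge3 by (auto elim!: evenE)
  qed
  have G1: "G u = 1" if "u * u = 1" for u
  proof -
    have "G u = (\<Sum>i = 1..N. (1::'a))" unfolding G_def
      by (rule sum.cong) (auto simp: power_mult power2_eq_square that)
    hence GN: "G u = of_nat N" by simp
    have "2 * (of_nat N :: 'a) + 2 = of_nat (3^m + 1)"
      using arg_cong[OF NN, of "of_nat :: nat \<Rightarrow> 'a"] by (simp add: algebra_simps)
    also have "(of_nat (3^m + 1) :: 'a) = 1" using three0 mpos by (simp add: zero_power)
    finally have h: "2 * (of_nat N :: 'a) + 2 = 1" .
    have "2 * (of_nat N - 1 :: 'a) = (2 * of_nat N + 2) - 4" by (simp add: algebra_simps)
    also have "\<dots> = 1 - 4" using h by simp
    also have "\<dots> = - 3" by simp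
    also have "\<dots> = 0" using three0 by simp
    finally have "2 * (of_nat N - 1 :: 'a) = 0" .
    hence "(of_nat N :: 'a) = 1" using two_ne0 by simp
    thus ?thesis using GN by simp
  qed
  have Gm1: "G u = -1" if u: "u \<in> U" and "u * u \<noteq> 1" for u
  proof -
    have "(u*u - 1) * G u = (u*u)^(N+1) - u*u" unfolding G_def
      using geo[of "u*u" N] by (simp add: power_mult power2_eq_square)
    also have "(u*u)^(N+1) = u^(2*(N+1))" by (metis power2_eq_square power_mult)
    also have "\<dots> = u^(3^m+1)" by (simp only: NN)
    also have "\<dots> = 1" using u unfolding U_def by simp
    finally have "(u*u - 1) * G u = (u*u - 1) * (-1)" by (simp add: algebra_simps)
    moreover have "u*u - 1 \<noteq> 0" using that(2) by simp
    ultimately show ?thesis using mult_left_cancel by blast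
  qed
  define Lam where "Lam = (\<Sum>u\<in>U. chi (g u))"
  define h where "h = (\<lambda>u. tr (2*m) ((-a) * u powi s))"
  have odds: "odd s"
  proof
    assume "even s"
    moreover have "even ((3::int)^m + 1)" by simp
    ultimately have "2 dvd gcd s (3^m+1)" by simp
    thus False using gs by simp
  qed
  have pm1: "(-1::'a) powi s = -1" using odds by (rule minus_one_powi_odd)
  have sq1: "u * u = 1 \<longleftrightarrow> u = 1 \<or> u = -1" for u :: 'a
  proof -
    have "u * u - 1 = (u - 1) * (u + 1)" by (simp add: algebra_simps)
    thus ?thesis by (auto simp: eq_neg_iff_add_eq_0)
  qed
  have sub: "{1, -1} \<subseteq> U" using one_U m1_U by auto
  have LamH: "Lam = (\<Sum>u\<in>U. chi (h u))"
  proof -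
    have split: "(\<Sum>u\<in>U. F u) = (\<Sum>u\<in>U - {1,-1}. F u) + (F 1 + F (-1))" for F :: "'a \<Rightarrow> complex"
      using sum.subset_diff[OF sub, of F] one_ne_m1 by simp
    have "(\<Sum>u\<in>U - {1,-1}. chi (g u)) = (\<Sum>u\<in>U - {1,-1}. chi (h u))"
    proof (rule sum.cong[OF refl])
      fix u assume u: "u \<in> U - {1,-1}"
      hence "u * u \<noteq> 1" using sq1 by auto
      hence "G u = -1" using Gm1 u by auto
      thus "chi (g u) = chi (h u)" using gG u unfolding h_def by simp
    qed
    moreover have "g 1 = h (-1)" "g (-1) = h 1"
      using gG[OF one_U] gG[OF m1_U] G1[of 1] G1[of "-1"] pm1 unfolding h_def by simp_all
    ultimately show ?thesis unfolding Lam_def split[of "\<lambda>u. chi (g u)"] split[of "\<lambda>u. chi (h u)"]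
      by (simp add: add.commute)
  qed
  have "Lam = (\<Sum>u\<in>U. chi (tr (2*m) ((-a) * u)))"
    unfolding LamH h_def using reindex_powi[OF gs, of "\<lambda>w. chi (tr (2*m) ((-a) * w))"] by simp
  also have "\<dots> = 1 - kloosterman m ((-a)^(3^m+1))" using a0 by (intro kloost_id) simp
  also have "(-a)^(3^m+1) = a^(3^m+1)" by simp
  finally have LamK: "Lam = 1 - kloosterman m (a^(3^m+1))" .
  have W: "walsh (2*m) f l = 1 + (\<Sum>u\<in>U. chi (g u) *
            ((if l = 0 \<or> l^(3^m-1) * u = -1 then of_nat (3^m) else 0) - 1))" for l
    by (rule walsh_formula) (use fg f0 gpf in auto)
  have W0: "walsh (2*m) f 0 = 1 + (of_nat (3^m) - 1) * Lam"
    unfolding W Lam_def by (simp add: sum_subtractf sum_distrib_right[symmetric] algebra_simps)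
  have Wl: "walsh (2*m) f l = 1 - Lam + of_nat (3^m) * chi (g (- inverse (l^(3^m-1))))"
    if l0: "l \<noteq> 0" for l
  proof -
    define u0 where "u0 = - inverse (l^(3^m-1))"
    have lq: "l^(3^m-1) \<noteq> 0" using l0 by simp
    have u0U: "u0 \<in> U"
    proof -
      have h1: "(l^(3^m-1))^(3^m+1) = 1" using U_img[OF l0] unfolding U_def by simp
      have ev: "even ((3::nat)^m+1)" by simp
      have "u0^(3^m+1) = (inverse (l^(3^m-1)))^(3^m+1)" unfolding u0_def using ev by (rule power_minus_even)
      also have "\<dots> = inverse ((l^(3^m-1))^(3^m+1))" by (rule power_inverse)
      also have "\<dots> = 1" unfolding h1 by simp
      finally show ?thesis unfolding U_def by simp
    qed
    have cond: "(l^(3^m-1) * u = -1) \<longleftrightarrow> u = u0" for u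
      unfolding u0_def using lq by (auto simp: field_simps)
    have "walsh (2*m) f l = 1 + (\<Sum>u\<in>U. (if u = u0 then of_nat (3^m) * chi (g u) else 0) - chi (g u))"
      unfolding W using l0 cond by (intro arg_cong[where f="\<lambda>x. 1 + x"] sum.cong) (auto simp: algebra_simps)
    also have "\<dots> = 1 + of_nat (3^m) * chi (g u0) - Lam"
      unfolding Lam_def sum_subtractf using u0U by (simp add: sum.delta)
    finally show ?thesis unfolding u0_def by simp
  qed
  have sq: "complex_of_real (sqrt (3 ^ (2*m))) = of_nat (3^m)"
  proof -
    have "(3::real)^(2*m) = (3^m)^2" by (simp add: power_mult[symmetric] mult.commute)
    thus ?thesis by simp
  qed
  have "regular_bent (2 * m) f \<longleftrightarrow> Lam = 1"
  proof
    assume "Lam = 1"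
    define fs where "fs = (\<lambda>l. if l = 0 then 0 else g (- inverse (l^(3^m-1))))"
    have pf0: "(0::'a) \<in> prime_field" unfolding pf_range by (metis of_nat_0 rangeI)
    have "\<forall>l. fs l \<in> prime_field" unfolding fs_def using gpf pf0 by auto
    moreover have "\<forall>l. walsh (2*m) f l = complex_of_real (sqrt (3 ^ (2*m))) * chi (fs l)"
    proof
      fix l
      show "walsh (2*m) f l = complex_of_real (sqrt (3 ^ (2*m))) * chi (fs l)"
      proof (cases "l = 0")
        case True
        thus ?thesis unfolding sq fs_def using W0 \<open>Lam = 1\<close> by (simp add: chi_0)
      next
        case False
        thus ?thesis unfolding sq fs_def using Wl[OF False] \<open>Lam = 1\<close> by simp
      qed
    qed
    ultimately show "regular_bent (2 * m) f" unfolding regular_bent_def by blast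
  next
    assume "regular_bent (2 * m) f"
    then obtain fs :: "'a \<Rightarrow> 'a" where fs: "\<forall>l. fs l \<in> prime_field"
      "\<forall>l. walsh (2*m) f l = complex_of_real (sqrt (3 ^ (2*m))) * chi (fs l)"
      unfolding regular_bent_def by blast
    define Q :: complex where "Q = of_nat (3^m)"
    define c0 where "c0 = chi (fs 0)"
    define c1 where "c1 = chi (fs 1)"
    define c2 where "c2 = chi (g (- inverse (1^(3^m-1))))"
    have c0v: "c0 \<in> {1, omega, omega^2}" unfolding c0_def using fs chi_vals by auto
    have c1v: "c1 \<in> {1, omega, omega^2}" unfolding c1_def using fs chi_vals by auto
    have c2v: "c2 \<in> {1, omega, omega^2}" unfolding c2_def using gpf chi_vals by auto
    have eq0: "1 + (Q - 1) * Lam = Q * c0" using W0 fs(2) sq unfolding Q_def c0_def by simp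
    have eq1: "1 - Lam + Q * c2 = Q * c1" using Wl[of 1] fs(2) sq unfolding Q_def c1_def c2_def by simp
    have Q0: "Q \<noteq> 0" unfolding Q_def by simp
    have LL: "Lam = 1 + Q * (c2 - c1)" using eq1 by (simp add: algebra_simps)
    have "Q * (1 + (Q - 1) * (c2 - c1)) = Q * c0" using eq0 unfolding LL by (simp add: algebra_simps)
    hence "1 + (Q - 1) * (c2 - c1) = c0" using Q0 mult_left_cancel by blast
    hence key: "c0 - 1 = (Q - 1) * (c2 - c1)" by (simp add: algebra_simps)
    show "Lam = 1"
    proof (rule ccontr)
      assume "Lam \<noteq> 1"
      hence "c2 \<noteq> c1" using LL by auto
      hence gt: "cmod (c2 - c1) > 1" using cube_diff c1v c2v by auto
      have "cmod (c0 - 1) \<le> cmod c0 + cmod (1::complex)" by (rule norm_triangle_ineq4)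
      hence le2: "cmod (c0 - 1) \<le> 2" using cube_norm[OF c0v] by simp
      have Qm: "cmod (Q - 1) = 3^m - 1"
      proof -
        have e: "Q - 1 = of_real (3^m - 1)" unfolding Q_def by simp
        have r: "(3::real)^m - 1 \<ge> 0" by simp
        have "cmod (Q - 1) = \<bar>(3::real)^m - 1\<bar>" unfolding e by (rule norm_of_real)
        thus ?thesis using r by simp
      qed
      have "(3::real)^1 \<le> 3^m" using mpos by (intro power_increasing) auto
      hence q3r: "(3::real)^m - 1 \<ge> 2" by simp
      have "cmod (c0 - 1) = (3^m - 1) * cmod (c2 - c1)" using key Qm by (simp add: norm_mult)
      also have "\<dots> > 2 * 1" using gt q3r by (intro mult_le_less_imp_less) auto
      finally show False using le2 by simp
    qed
  qed
  thus ?thesis using LamK by simp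
qed

end

theorem corollary8:
  fixes m :: nat and s :: int and a :: "'a::{field,finite}" and f :: "'a \<Rightarrow> 'a"
  assumes "m > 0"
    and "card (UNIV :: 'a set) = 3 ^ (2 * m)"
    and "gcd s (3 ^ m + 1) = 1"
    and "a \<noteq> 0"
    and "\<And>x. f x = (if x = 0 then 0 else
           (\<Sum>i = 1..(3 ^ m + 1) div 2 - 1.
              tr (2 * m) (a * x powi ((2 * int i + s) * (3 ^ m - 1)))))"
  shows "regular_bent (2 * m) f \<longleftrightarrow> kloosterman m (a ^ (3 ^ m + 1)) = 0"
proof -
  interpret FF m "TYPE('a)" by standard (use assms in auto)
  show ?thesis using main[OF assms(3) assms(4) assms(5)] .
qed

end
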